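(* In the setting described in the context, assume $c>4.1\cdot 10^{-5}a_2b^3$ and $b>10^5$. If $z=w_n$ with $n\geq 4$, then $\log z>\frac{n}{2}\log(bc)$.
   Context: A $D(4)$-quadruple is a set of four distinct positive integers such that the product of any two distinct elements increased by $4$ is a perfect square. Setting: $a_1<a_2<b<c<d$ are positive integers such that $\{a_1,b,c,d\}$ and $\{a_2,b,c,d\}$ are $D(4)$-quadruples. Let $r_2,s_2,t,z$ be the positive integers with $a_2b+4=r_2^2$, $a_2c+4=s_2^2$, $bc+4=t^2$, $cd+4=z^2$. For integers $z_{(0)},x_{(0)},z_{(1)},y_{(1)}$ define the sequences $v_0=z_{(0)}$, $v_1=\frac12(s_2z_{(0)}+cx_{(0)})$, $v_{m+2}=s_2v_{m+1}-v_m$, and $w_0=z_{(1)}$, $w_1=\frac12(tz_{(1)}+cy_{(1)})$, $w_{n+2}=tw_{n+1}-w_n$. The value $z$ admits a representation $z=v_m=w_n$ with nonnegative integers $m,n$ where either (i) $m\equiv n\equiv 0\pmod 2$, $x_{(0)}=y_{(1)}=2$, $|z_{(0)}|=|z_{(1)}|=2$, $z_{(0)}z_{(1)}>0$; or (ii) $m\equiv n\equiv 1\pmod 2$, $x_{(0)}=y_{(1)}=r_2$, $|z_{(0)}|=t$, $|z_{(1)}|=s_2$, $z_{(0)}z_{(1)}>0$. Statements "$z=w_n$" or "$z=v_m=w_n$" refer to such a representation. *)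

theory Defs
  imports Complex_Main
begin

definition is_square :: "nat \<Rightarrow> bool" where
  "is_square n \<longleftrightarrow> (\<exists>k. n = k^2)"

definition D4_quadruple :: "nat \<Rightarrow> nat \<Rightarrow> nat \<Rightarrow> nat \<Rightarrow> bool" where
  "D4_quadruple a b c d \<longleftrightarrow> distinct [a, b, c, d] \<and> (\<forall>x\<in>{a,b,c,d}. 0 < x) \<and>
     (\<forall>x\<in>{a,b,c,d}. \<forall>y\<in>{a,b,c,d}. x \<noteq> y \<longrightarrow> is_square (x * y + 4))"

text \<open>Second-order linear recurrence u_0, u_1, u_{k+2} = s u_{k+1} - u_k (over the reals,
so that the initial value (s z + c x)/2 is taken literally).\<close>
fun lin_rec :: "real \<Rightarrow> real \<Rightarrow> real \<Rightarrow> nat \<Rightarrow> real" where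
  "lin_rec u0 u1 s 0 = u0"
| "lin_rec u0 u1 s (Suc 0) = u1"
| "lin_rec u0 u1 s (Suc (Suc k)) = s * lin_rec u0 u1 s (Suc k) - lin_rec u0 u1 s k"

end

theory Submission
  imports Defs
begin

lemma growth_aux:
  fixes S t w0 w1 :: real
  assumes S: "S > 0" and tS: "t*S - 1 \<ge> S^2" and w1: "w1 \<ge> 0" and base: "t*w1 - w0 \<ge> S*w1"
  shows "S * lin_rec w0 w1 t (Suc k) \<le> lin_rec w0 w1 t (Suc (Suc k)) \<and> 0 \<le> lin_rec w0 w1 t (Suc k)"
proof (induction k)
  case 0 then show ?case using w1 base by (simp add: mult.commute)
next
  case (Suc k)
  define a where "a = lin_rec w0 w1 t (Suc k)"
  define b where "b = lin_rec w0 w1 t (Suc (Suc k))"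
  have ab: "S*a \<le> b" "0 \<le> a" using Suc unfolding a_def b_def by auto
  have b0: "0 \<le> b" using ab S by (meson mult_nonneg_nonneg order.trans less_imp_le)
  have "S*(t*b - a) = S*t*b - S*a" by (simp add: algebra_simps)
  also have "\<dots> \<ge> S*t*b - b" using ab by linarith
  hence "S*(t*b - a) \<ge> b*(t*S - 1)" by (simp add: algebra_simps calculation)
  moreover have "b*(t*S - 1) \<ge> b*S^2" using b0 tS by (simp add: mult_left_mono)
  ultimately have "S*(t*b-a) \<ge> S*(S*b)" by (simp add: power2_eq_square algebra_simps)
  hence "S*b \<le> t*b - a" using S by simp
  then show ?case using b0 unfolding a_def b_def by simp
qed

lemma growth:
  fixes S t w0 w1 :: real
  assumes S: "S > 0" and tS: "t*S - 1 \<ge> S^2" and w1: "w1 \<ge> 0" and base: "t*w1 - w0 \<ge> S*w1"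
  shows "lin_rec w0 w1 t (Suc k) \<ge> S^k * w1"
proof (induction k)
  case 0 then show ?case by simp
next
  case (Suc k)
  have "S^(Suc k) * w1 = S * (S^k*w1)" by simp
  also have "\<dots> \<le> S * lin_rec w0 w1 t (Suc k)" using Suc S by simp
  also have "\<dots> \<le> lin_rec w0 w1 t (Suc (Suc k))" using growth_aux[OF assms] by blast
  finally show ?case .
qed

lemma key:
  fixes A B C T S R Q :: real
  assumes A: "A \<ge> 1" and B: "B > 10^5" and BC: "B < C"
   and T2: "T^2 = B*C+4" and R2: "R^2 = A*B+4" and Q2: "Q^2 = A*C+4"
   and S: "S = sqrt (B*C)" and T0: "T > 0" and R0: "R>0" and Q0: "Q > 0"
   and hc: "C > 41 / 1000000 * A * B ^ 3"
  shows "T*S - 1 \<ge> S^2" "S > 0"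
    "(T*2 + C*2)/2 \<ge> 0 \<and> T*((T*2 + C*2)/2) - 2 \<ge> S*((T*2 + C*2)/2) \<and> (T*2 + C*2)/2 > S"
    "(T*(-2) + C*2)/2 \<ge> 0 \<and> T*((T*(-2) + C*2)/2) - (-2) \<ge> S*((T*(-2) + C*2)/2) \<and> (T*(-2) + C*2)/2 > S"
    "(T*Q + C*R)/2 \<ge> 0 \<and> T*((T*Q + C*R)/2) - Q \<ge> S*((T*Q + C*R)/2) \<and> (T*Q + C*R)/2 > S"
    "(T*(-Q) + C*R)/2 \<ge> 0 \<and> T*((T*(-Q) + C*R)/2) - (-Q) \<ge> S*((T*(-Q) + C*R)/2) \<and> (T*(-Q) + C*R)/2 > S"
proof -
  have B': "B > 100000" using B by simp
  have B3: "41 / 1000000 * A * B ^ 3 \<ge> 41/10 * A * B^2"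
  proof -
    have "41 / 1000000 * A * B ^ 3 = (41 / 1000000 * A * B^2) * B" by (simp add: power3_eq_cube power2_eq_square)
    also have "\<dots> \<ge> (41 / 1000000 * A * B^2) * 100000" using B' A by (intro mult_left_mono) auto
    finally show ?thesis by simp
  qed
  have "41/10*A*B^2 = 41/10*(A*B^2)" by simp
  hence C4: "C > 41/10*(A*B^2)" using B3 hc by linarith
  have S2: "S^2 = B*C" using S B' BC by simp
  have S0: "S > 0" using S B' BC by simp
  have TS: "S \<le> T" using S T2 T0 proof -
    have "sqrt (B*C) \<le> sqrt (T^2)" using T2 by (intro real_sqrt_le_mono) simp
    thus ?thesis using S T0 by simp
  qed
  have TSd: "(T-S)*(T+S) = 4" proof -
    have "(T-S)*(T+S) = T^2 - S^2" by (simp add: power2_eq_square algebra_simps)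
    thus ?thesis using T2 S2 by simp
  qed
  have tS: "T*S - 1 \<ge> S^2"
  proof -
    have e: "(T*S)^2 = (S^2+4)*S^2" using T2 S2 by (simp add: power_mult_distrib)
    have "(S^2+1)^2 \<le> (S^2+4)*S^2" proof -
      have X: "S^2 \<ge> 1" using S2 B' BC less_1_mult[of B C] by simp
      have "(S^2+1)^2 = (S^2)^2 + 2*S^2 + 1" "(S^2+4)*S^2 = (S^2)^2 + 4*S^2" by (simp_all add: power2_eq_square algebra_simps)
      thus ?thesis using X by simp
    qed
    hence "(S^2+1)^2 \<le> (T*S)^2" using e by simp
    moreover have "0 \<le> T*S" using T0 S0 by simp
    ultimately have "S^2+1 \<le> T*S" by (rule power2_le_imp_le)
    thus ?thesis by simp
  qed
  have B2: "B^2 \<ge> 100000 * B" using B' by (simp add: power2_eq_square)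
  have AB2: "A*B^2 \<ge> B^2" using A mult_right_mono[of 1 A "B^2"] by simp
  have C0: "C > 0" using B' BC by simp
  have C1: "C \<ge> 4*B + 1" using C4 B2 AB2 B' by linarith
  have CS: "C \<ge> S"
  proof -
    have "B*C \<le> C*C" using BC C0 by (intro mult_right_mono) auto
    hence "S^2 \<le> C^2" using S2 by (simp add: power2_eq_square)
    moreover have "0 \<le> C" using C0 by simp
    ultimately show ?thesis by (rule power2_le_imp_le)
  qed
  have CT: "C > 2*T"
  proof -
    have "C*C \<ge> C*(4*B+1)" using C1 C0 by (intro mult_left_mono) auto
    hence "(2*T)^2 < C^2" using T2 C1 B' by (simp add: power2_eq_square algebra_simps)
    moreover have "0 \<le> C" using C0 by simp
    ultimately show ?thesis by (rule power2_less_imp_less)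
  qed
  define E where "E = C^2 - B*C - A*C - 4"
  define P where "P = C*R"
  define Q' where "Q' = T*Q"
  have PQ: "P^2 - Q'^2 = 4*E"
  proof -
    have "P^2 = C^2*R^2" "Q'^2 = T^2*Q^2" unfolding P_def Q'_def by (simp_all add: power_mult_distrib)
    thus ?thesis unfolding E_def using T2 R2 Q2 by (simp add: algebra_simps power2_eq_square)
  qed
  have CAB: "C \<ge> 2*B + 2*A + 2"
  proof -
    have "A*B^2 \<ge> A * (100000*B)" using B2 A by (intro mult_left_mono) auto
    moreover have "A*B \<ge> A" using A B' mult_left_mono[of 1 B A] by simp
    ultimately show ?thesis using C4 AB2 B2 B' A by linarith
  qed
  have E1: "E \<ge> C^2/2"
  proof -
    have "C*(C - B - A - 1) \<ge> C*(C/2)" using CAB C0 by (intro mult_left_mono) auto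
    moreover have "C \<ge> 4" using C1 B' by linarith
    ultimately show ?thesis unfolding E_def by (simp add: power2_eq_square algebra_simps)
  qed
  have E0: "E > 0" proof - have "C^2 > 0" using C0 by simp thus ?thesis using E1 by linarith qed
  have SP2: "(S*P)^2 = C^3*(A*B^2 + 4*B)"
    unfolding P_def using S2 R2 by (simp add: power_mult_distrib power2_eq_square power3_eq_cube algebra_simps)
  have C4D: "C > 4*(A*B^2 + 4*B)"
  proof -
    have "A*(B*B) \<ge> B*B" using A B' mult_right_mono[of 1 A "B*B"] by simp
    hence "A*B^2 \<ge> 100000*B" using B2 by (simp add: power2_eq_square algebra_simps)
    hence "4*(A*B^2 + 4*B) = 4*(A*B^2) + 16*B" "A*B^2 \<ge> 100000*B" by simp_all
    thus ?thesis using C4 B' by linarith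
  qed
  have ESP: "E > S*P"
  proof -
    have "E^2 \<ge> (C^2/2)^2" using E1 C0 by (intro power_mono) auto
    moreover have "(C^2/2)^2 = C^3 * (C/4)" by (simp add: power2_eq_square power3_eq_cube)
    moreover have "C^3 * (C/4) > C^3*(A*B^2 + 4*B)" using C4D C0 by (intro mult_strict_left_mono) auto
    ultimately have "(S*P)^2 < E^2" using SP2 by linarith
    moreover have "0 \<le> E" using E0 by simp
    ultimately show ?thesis by (rule power2_less_imp_less)
  qed
  show "T*S - 1 \<ge> S^2" by (rule tS)
  show "S > 0" by (rule S0)
  show "(T*2 + C*2)/2 \<ge> 0 \<and> T*((T*2 + C*2)/2) - 2 \<ge> S*((T*2 + C*2)/2) \<and> (T*2 + C*2)/2 > S"
  proof -
    have w: "(T*2 + C*2)/2 = T + C" by simp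
    have "(T-S)*(T+C) \<ge> (T-S)*(T+S)" using TS CS by (intro mult_left_mono) auto
    hence "(T-S)*(T+C) \<ge> 4" using TSd by simp
    hence "T*(T+C) - 2 \<ge> S*(T+C)" by (simp add: algebra_simps)
    thus ?thesis unfolding w using T0 CS S0 by simp
  qed
  show "(T*(-2) + C*2)/2 \<ge> 0 \<and> T*((T*(-2) + C*2)/2) - (-2) \<ge> S*((T*(-2) + C*2)/2) \<and> (T*(-2) + C*2)/2 > S"
  proof -
    have w: "(T*(-2) + C*2)/2 = C - T" by simp
    have "S*(C-T) \<le> T*(C-T)" using TS CT T0 by (intro mult_right_mono) auto
    thus ?thesis unfolding w using CT TS T0 by (intro conjI; linarith)
  qed
  have R2': "R \<ge> 2"
  proof -
    have "A*B \<ge> 0" using A B' by simp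
    hence "2^2 \<le> R^2" using R2 by simp
    moreover have "0 \<le> R" using R0 by simp
    ultimately show ?thesis by (rule power2_le_imp_le)
  qed
  show "(T*Q + C*R)/2 \<ge> 0 \<and> T*((T*Q + C*R)/2) - Q \<ge> S*((T*Q + C*R)/2) \<and> (T*Q + C*R)/2 > S"
  proof -
    define w where "w = (T*Q + C*R)/2"
    have CR: "C*R \<ge> 2*C" using R2' C0 by simp
    have TQ: "T*Q > 0" using T0 Q0 by simp
    have w0: "w \<ge> T*Q/2" unfolding w_def using CR C0 by simp
    have "(T-S)*w \<ge> (T-S)*(T*Q/2)" using w0 TS by (intro mult_left_mono) auto
    moreover have "(T-S)*T \<ge> (T-S)*((T+S)/2)" using TS by (intro mult_left_mono) auto
    hence "(T-S)*T \<ge> 2" using TSd by simp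
    hence "(T-S)*T*Q \<ge> 2*Q" using Q0 by (intro mult_right_mono) auto
    hence "(T-S)*(T*Q/2) \<ge> Q" by (simp add: algebra_simps)
    ultimately have "(T-S)*w \<ge> Q" by linarith
    hence "T*w - Q \<ge> S*w" by (simp add: algebra_simps)
    moreover have "w > S" proof - have "w = T*Q/2 + C*R/2" unfolding w_def by simp thus ?thesis using CR CS TQ C0 by linarith qed
    ultimately show ?thesis using S0 unfolding w_def by simp
  qed
  show "(T*(-Q) + C*R)/2 \<ge> 0 \<and> T*((T*(-Q) + C*R)/2) - (-Q) \<ge> S*((T*(-Q) + C*R)/2) \<and> (T*(-Q) + C*R)/2 > S"
  proof -
    have w: "(T*(-Q) + C*R)/2 = (P - Q')/2" unfolding P_def Q'_def by simp
    have P0: "P > 0" "Q' > 0" unfolding P_def Q'_def using C0 R0 T0 Q0 by simp_all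
    have "Q'^2 < P^2" using PQ E0 by simp
    moreover have "0 \<le> P" using P0 by simp
    ultimately have PQ': "Q' < P" by (rule power2_less_imp_less)
    have "(P-Q')*(P+Q') = P^2 - Q'^2" by (simp add: power2_eq_square algebra_simps)
    hence e4: "(P-Q')*(P+Q') = 4*E" using PQ by simp
    have "(P-Q')*(P+Q') \<le> (P-Q')*(2*P)" using PQ' P0 by (intro mult_left_mono) linarith+
    hence "(P-Q')*(2*P) > 4*(S*P)" using e4 ESP by linarith
    hence "P*(P-Q') > P*(2*S)" by (simp add: algebra_simps)
    hence big: "P - Q' > 2*S" using P0 by simp
    have "S*((P-Q')/2) \<le> T*((P-Q')/2)" using TS PQ' by (intro mult_right_mono) simp_all
    moreover have "(P-Q')/2 > S" "(P-Q')/2 \<ge> 0" using big PQ' by simp_all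
    ultimately show ?thesis unfolding w using Q0 by simp
  qed
qed

theorem mainTheorem8:
  fixes a1 a2 b c d r2 s2 t z :: nat
    and z0 x0 z1 y1 :: int
    and m n :: nat
  assumes pos: "0 < a1" and ord: "a1 < a2" "a2 < b" "b < c" "c < d"
    and q1: "D4_quadruple a1 b c d" and q2: "D4_quadruple a2 b c d"
    and r2: "0 < r2" "a2 * b + 4 = r2^2"
    and s2: "0 < s2" "a2 * c + 4 = s2^2"
    and t: "0 < t" "b * c + 4 = t^2"
    and z: "0 < z" "c * d + 4 = z^2"
    and v: "real z = lin_rec (of_int z0) ((real s2 * of_int z0 + real c * of_int x0) / 2) (real s2) m"
    and w: "real z = lin_rec (of_int z1) ((real t * of_int z1 + real c * of_int y1) / 2) (real t) n"
    and cases: "(even m \<and> even n \<and> x0 = 2 \<and> y1 = 2 \<and> \<bar>z0\<bar> = 2 \<and> \<bar>z1\<bar> = 2 \<and> z0 * z1 > 0)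
              \<or> (odd m \<and> odd n \<and> x0 = int r2 \<and> y1 = int r2 \<and> \<bar>z0\<bar> = int t \<and> \<bar>z1\<bar> = int s2 \<and> z0 * z1 > 0)"
    and hc: "real c > 41 / 1000000 * real a2 * real b ^ 3"
    and hb: "b > 10^5"
    and hn: "n \<ge> 4"
  shows "ln (real z) > real n / 2 * ln (real b * real c)"
  proof -
  define A where "A = real a2"
  define B where "B = real b"
  define C where "C = real c"
  define T where "T = real t"
  define S where "S = sqrt (B*C)"
  define R where "R = real r2"
  define Q where "Q = real s2"
  have A: "A \<ge> 1" unfolding A_def using pos ord by simp
  have B: "B > 10^5" unfolding B_def using hb by simp
  have BC: "B < C" unfolding B_def C_def using ord by simp
  have T2: "T^2 = B*C+4" unfolding T_def B_def C_def using arg_cong[OF t(2), of real] by simp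
  have R2: "R^2 = A*B+4" unfolding R_def B_def A_def using arg_cong[OF r2(2), of real] by simp
  have Q2: "Q^2 = A*C+4" unfolding Q_def C_def A_def using arg_cong[OF s2(2), of real] by simp
  have T0: "T > 0" "R > 0" "Q > 0" unfolding T_def R_def Q_def using t r2 s2 by simp_all
  have hc': "C > 41 / 1000000 * A * B ^ 3" unfolding A_def B_def C_def using hc by simp
  note K = key[OF A B BC T2 R2 Q2 S_def T0 hc']
  obtain k where nk: "n = Suc k" using hn by (cases n) auto
  have zS: "real z > S^n"
  proof -
    have gen: "real z > S^n" if wz: "real z = lin_rec w0 w1 T n"
      and h: "w1 \<ge> 0 \<and> T*w1 - w0 \<ge> S*w1 \<and> w1 > S" for w0 w1
    proof -
      have "lin_rec w0 w1 T (Suc k) \<ge> S^k * w1"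
        using h by (intro growth[OF K(2) K(1)]) auto
      moreover have "S^k * w1 > S^k * S" using h K(2) by (intro mult_strict_left_mono) auto
      ultimately show ?thesis using wz nk by (simp add: mult.commute)
    qed
    from cases have "(z1 = 2 \<and> y1 = 2) \<or> (z1 = -2 \<and> y1 = 2) \<or> (z1 = int s2 \<and> y1 = int r2) \<or> (z1 = - int s2 \<and> y1 = int r2)"
      by auto
    then show ?thesis
    proof (elim disjE conjE)
      assume "z1 = 2" "y1 = 2"
      thus ?thesis using w K(3) by (intro gen[of 2 "(T*2 + C*2)/2"]) (simp_all add: T_def C_def)
    next
      assume "z1 = -2" "y1 = 2"
      thus ?thesis using w K(4) by (intro gen[of "-2" "(T*(-2) + C*2)/2"]) (simp_all add: T_def C_def)
    next
      assume "z1 = int s2" "y1 = int r2"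
      thus ?thesis using w K(5) by (intro gen[of Q "(T*Q + C*R)/2"]) (simp_all add: T_def C_def Q_def R_def)
    next
      assume "z1 = - int s2" "y1 = int r2"
      thus ?thesis using w K(6) by (intro gen[of "-Q" "(T*(-Q) + C*R)/2"]) (simp_all add: T_def C_def Q_def R_def)
    qed
  qed
  have Sn0: "S^n > 0" using K(2) by simp
  have "ln (S^n) < ln (real z)" using zS Sn0 by simp
  moreover have "ln (S^n) = real n / 2 * ln (real b * real c)"
    unfolding ln_realpow S_def B_def C_def by (simp add: ln_sqrt)
  ultimately show ?thesis by simp
qed

end
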